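(* Let $A$ be a real $n\times n$ matrix and $\mathbf{c},\mathbf{d}\in\mathbb{R}^n$ with $A+A^T=\mathbf{c}\mathbf{d}^T$, and let $K=A-\tfrac12\mathbf{c}\mathbf{d}^T$. Let $\lambda\in\mathbb{R}$ and let $(\mathbf{x},\pi)$ be an optimal solution of $LP(\lambda)$. Then for every $\mathbf{v}\in\mathbb{R}^n$ with $\mathbf{v}^T\mathbf{x}=\lambda$, the probability vector $\mathbf{x}$ is a symmetric Nash equilibrium of the bimatrix game $(Z,Z^T)$, where $Z=K+\tfrac12\mathbf{c}\mathbf{v}^T$.
   Context: For fixed $\lambda\in\mathbb{R}$, $LP(\lambda)$ is the linear program in variables $\mathbf{x}\in\mathbb{R}^n,\pi\in\mathbb{R}$: maximize $\tfrac12\lambda\,\mathbf{x}^T\mathbf{c}-\pi$ subject to $K\mathbf{x}+\tfrac{\lambda}{2}\mathbf{c}\le\pi\mathbf{1}$ (componentwise), $\mathbf{x}\ge0$, $\sum_ix_i=1$; $\mathbf{1}$ is the all-ones vector. For a square matrix $Z$, a probability vector $\mathbf{x}$ is a symmetric Nash equilibrium of $(Z,Z^T)$ if $(\mathbf{x},\mathbf{x})$ is a Nash equilibrium, equivalently, $x_i>0$ implies $(Z\mathbf{x})_i=\max_k(Z\mathbf{x})_k$. *)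

theory Defs
  imports "HOL-Analysis.Analysis"
begin

definition outer :: "real^'n \<Rightarrow> real^'n \<Rightarrow> real^'n^'n" where
  "outer c d = (\<chi> i j. c $ i * d $ j)"

definition prob_vec :: "real^'n \<Rightarrow> bool" where
  "prob_vec x \<longleftrightarrow> (\<forall>i. x $ i \<ge> 0) \<and> sum (\<lambda>i. x $ i) UNIV = 1"

definition LP_feasible :: "real^'n^'n \<Rightarrow> real^'n \<Rightarrow> real \<Rightarrow> real^'n \<Rightarrow> real \<Rightarrow> bool" where
  "LP_feasible K c lam x p \<longleftrightarrow>
     (\<forall>i. (K *v x) $ i + lam / 2 * c $ i \<le> p) \<and> prob_vec x"

definition LP_objective :: "real^'n \<Rightarrow> real \<Rightarrow> real^'n \<Rightarrow> real \<Rightarrow> real" where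
  "LP_objective c lam x p = lam / 2 * (x \<bullet> c) - p"

definition LP_optimal :: "real^'n^'n \<Rightarrow> real^'n \<Rightarrow> real \<Rightarrow> real^'n \<Rightarrow> real \<Rightarrow> bool" where
  "LP_optimal K c lam x p \<longleftrightarrow> LP_feasible K c lam x p \<and>
     (\<forall>x' p'. LP_feasible K c lam x' p' \<longrightarrow> LP_objective c lam x' p' \<le> LP_objective c lam x p)"

definition nash_eq :: "real^'n^'n \<Rightarrow> real^'n^'n \<Rightarrow> real^'n \<Rightarrow> real^'n \<Rightarrow> bool" where
  "nash_eq A B x y \<longleftrightarrow> prob_vec x \<and> prob_vec y \<and>
     (\<forall>x'. prob_vec x' \<longrightarrow> x' \<bullet> (A *v y) \<le> x \<bullet> (A *v y)) \<and>
     (\<forall>y'. prob_vec y' \<longrightarrow> x \<bullet> (B *v y') \<le> x \<bullet> (B *v y))"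

definition symmetric_nash :: "real^'n^'n \<Rightarrow> real^'n \<Rightarrow> bool" where
  "symmetric_nash Z x \<longleftrightarrow> nash_eq Z (transpose Z) x x"

end

theory Submission
  imports Defs
begin

lemma simplex_compact: "compact {x::real^'n. prob_vec x}"
proof -
  have eq: "{x::real^'n. prob_vec x} = (\<Inter>i. {x. 0 \<le> x $ i}) \<inter> {x. sum (\<lambda>i. x $ i) UNIV = 1}"
    by (auto simp: prob_vec_def)
  have "closed {x::real^'n. prob_vec x}"
  proof -
    have "closed {x::real^'n. 0 \<le> x $ i}" for i
      by (rule closed_Collect_le) (auto intro: continuous_intros)
    then show ?thesis unfolding eq
      by (intro closed_Int closed_INT closed_Collect_eq continuous_intros) auto
  qed
  moreover have "bounded {x::real^'n. prob_vec x}"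
  proof -
    have "norm x \<le> 1" if "prob_vec x" for x :: "real^'n"
    proof -
      have "norm x \<le> sum (\<lambda>i. \<bar>x$i\<bar>) UNIV" by (rule norm_le_l1_cart)
      also have "\<dots> = sum (\<lambda>i. x$i) UNIV" using that by (auto simp: prob_vec_def)
      also have "\<dots> = 1" using that by (auto simp: prob_vec_def)
      finally show ?thesis .
    qed
    then show ?thesis unfolding bounded_iff by blast
  qed
  ultimately show ?thesis using compact_eq_bounded_closed by blast
qed

lemma simplex_convex: "convex {x::real^'n. prob_vec x}"
  unfolding convex_def prob_vec_def
proof (intro allI impI ballI, safe)
  fix x y :: "real^'n" and u v :: real and i
  assume "\<forall>i. 0 \<le> x $ i" "\<forall>i. 0 \<le> y $ i" "0 \<le> u" "0 \<le> v"
  then show "0 \<le> (u *\<^sub>R x + v *\<^sub>R y) $ i" by simp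
next
  fix x y :: "real^'n" and u v :: real
  assume "(\<Sum>i\<in>UNIV. x $ i) = 1" "(\<Sum>i\<in>UNIV. y $ i) = 1" "u + v = 1"
  then show "(\<Sum>i\<in>UNIV. (u *\<^sub>R x + v *\<^sub>R y) $ i) = 1"
    by (simp add: sum.distrib sum_distrib_left[symmetric])
qed

lemma simplex_nonempty: "{x::real^'n. prob_vec x} \<noteq> {}"
proof -
  obtain k :: 'n where True by blast
  have "prob_vec (axis k (1::real))"
    by (auto simp: prob_vec_def axis_def)
  then show ?thesis by blast
qed

lemma exists_eq:
  fixes g :: "real^'n \<Rightarrow> real^'n"
  assumes cont: "continuous_on {x. prob_vec x} g"
    and orth: "\<And>x. prob_vec x \<Longrightarrow> x \<bullet> g x = 0"
  shows "\<exists>x. prob_vec x \<and> (\<forall>i. g x $ i \<le> 0)"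
proof -
  define S where "S = {x::real^'n. prob_vec x}"
  define s where "s x = (\<Sum>j\<in>UNIV. max 0 (g x $ j))" for x
  define f where "f x = (\<chi> i. (x $ i + max 0 (g x $ i)) / (1 + s x))" for x
  have spos: "s x \<ge> 0" for x unfolding s_def by (intro sum_nonneg) auto
  have contf: "continuous_on S f"
    unfolding f_def s_def S_def
    using spos unfolding s_def by (intro continuous_intros cont) (auto simp: add_nonneg_eq_0_iff)
  have fim: "f \<in> S \<rightarrow> S"
  proof
    fix x assume "x \<in> S"
    then have px: "prob_vec x" by (simp add: S_def)
    have "0 \<le> f x $ i" for i
      using px spos[of x] by (auto simp: f_def prob_vec_def intro!: divide_nonneg_pos add_nonneg_nonneg)
    moreover have "sum (\<lambda>i. f x $ i) UNIV = 1"
    proof -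
      have "sum (\<lambda>i. f x $ i) UNIV = (\<Sum>i\<in>UNIV. x $ i + max 0 (g x $ i)) / (1 + s x)"
        by (simp add: f_def sum_divide_distrib)
      also have "\<dots> = (1 + s x) / (1 + s x)"
        using px by (simp add: sum.distrib prob_vec_def s_def)
      also have "\<dots> = 1" using spos[of x] by simp
      finally show ?thesis .
    qed
    ultimately show "f x \<in> S" by (simp add: S_def prob_vec_def)
  qed
  obtain x where xS: "x \<in> S" and fx: "f x = x"
    using brouwer[of S f] simplex_compact simplex_convex simplex_nonempty contf fim
    unfolding S_def by blast
  have px: "prob_vec x" using xS by (simp add: S_def)
  have key: "x $ i * s x = max 0 (g x $ i)" for i
  proof -
    have "(x $ i + max 0 (g x $ i)) / (1 + s x) = x $ i"
      using fx by (metis f_def vec_lambda_beta)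
    then have "x $ i + max 0 (g x $ i) = x $ i * (1 + s x)"
      using spos[of x] by (simp add: field_simps)
    then show ?thesis by (simp add: algebra_simps)
  qed
  have "(\<Sum>i\<in>UNIV. (max 0 (g x $ i))^2) = (\<Sum>i\<in>UNIV. s x * (x $ i * g x $ i))"
  proof (rule sum.cong)
    fix i
    have "(max 0 (g x $ i))^2 = max 0 (g x $ i) * g x $ i"
      by (simp add: power2_eq_square max_def)
    also have "\<dots> = s x * (x $ i * g x $ i)" by (simp add: key[symmetric])
    finally show "(max 0 (g x $ i))^2 = s x * (x $ i * g x $ i)" .
  qed simp
  also have "\<dots> = s x * (x \<bullet> g x)" by (simp add: inner_vec_def sum_distrib_left)
  also have "\<dots> = 0" using orth[OF px] by simp
  finally have "(\<Sum>i\<in>UNIV. (max 0 (g x $ i))^2) = 0" .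
  then have "\<forall>i\<in>UNIV. (max 0 (g x $ i))^2 = 0"
    by (subst sum_nonneg_eq_0_iff[symmetric]) auto
  then have "\<forall>i. g x $ i \<le> 0" by (metis UNIV_I max.cobounded2 power_zero_numeral zero_le_power2 max_def power2_eq_square mult_eq_0_iff)
  then show ?thesis using px by blast
qed

theorem lemma4p4:
  fixes A :: "real^'n^'n" and c d v x :: "real^'n" and lam p :: real
  assumes "A + transpose A = outer c d"
    and "LP_optimal (A - (1/2) *\<^sub>R outer c d) c lam x p"
    and "v \<bullet> x = lam"
  shows "symmetric_nash ((A - (1/2) *\<^sub>R outer c d) + (1/2) *\<^sub>R outer c v) x"
proof -
  define K where "K = A - (1/2) *\<^sub>R outer c d"
  define Z where "Z = K + (1/2) *\<^sub>R outer c v"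
  have mvo: "(outer a b *v y) $ i = a $ i * (b \<bullet> y)" for a b y :: "real^'n" and i
    by (simp add: outer_def matrix_vector_mult_def inner_vec_def sum_distrib_left mult.assoc)
  have feas: "\<forall>i. (K *v x) $ i + lam / 2 * c $ i \<le> p" and px: "prob_vec x"
    using assms(2) unfolding K_def LP_optimal_def LP_feasible_def by auto
  have opt: "\<And>x' p'. LP_feasible K c lam x' p' \<Longrightarrow> LP_objective c lam x' p' \<le> LP_objective c lam x p"
    using assms(2) unfolding K_def LP_optimal_def by auto
  have quad: "y \<bullet> (K *v y) = 0" for y
  proof -
    have t: "y \<bullet> (transpose A *v y) = y \<bullet> (A *v y)"
      using dot_lmul_matrix[of y A y] by (simp add: inner_commute)
    have "y \<bullet> ((A + transpose A) *v y) = y \<bullet> (outer c d *v y)" using assms(1) by simp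
    then have "2 * (y \<bullet> (A *v y)) = y \<bullet> (outer c d *v y)"
      using t by (simp add: matrix_vector_mult_add_rdistrib inner_add_right)
    then show ?thesis
      by (simp add: K_def matrix_vector_mult_diff_rdistrib scaleR_matrix_vector_assoc[symmetric] inner_diff_right)
  qed
  have sum1: "y \<bullet> (1::real^'n) = 1" if "prob_vec y" for y
    using that by (simp add: prob_vec_def inner_vec_def)
  define g where "g y = K *v y + (lam/2) *\<^sub>R c - (lam/2 * (y \<bullet> c)) *\<^sub>R (1::real^'n)" for y
  have contg: "continuous_on {y. prob_vec y} g"
  proof -
    have "bounded_linear (\<lambda>y. K *v y)"
      using matrix_vector_mul_linear linear_conv_bounded_linear by blast
    then have "continuous_on {y. prob_vec y} (\<lambda>y. K *v y)"
      using linear_continuous_on by blast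
    then show ?thesis unfolding g_def by (intro continuous_intros)
  qed
  have orth: "y \<bullet> g y = 0" if "prob_vec y" for y
    using quad[of y] sum1[OF that]
    by (simp add: g_def inner_diff_right inner_add_right inner_commute)
  obtain x0 where px0: "prob_vec x0" and gx0: "\<forall>i. g x0 $ i \<le> 0"
    using exists_eq[OF contg orth] by blast
  have "LP_feasible K c lam x0 (lam/2 * (x0 \<bullet> c))"
    unfolding LP_feasible_def using px0 gx0 by (simp add: g_def)
  then have "LP_objective c lam x0 (lam/2 * (x0 \<bullet> c)) \<le> LP_objective c lam x p" by (rule opt)
  then have ple: "p \<le> lam / 2 * (x \<bullet> c)" by (simp add: LP_objective_def inner_commute)
  have Zx: "(Z *v x) $ i \<le> p" for i
  proof -
    have "(Z *v x) $ i = (K *v x) $ i + lam / 2 * c $ i"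
      using assms(3) by (simp add: Z_def matrix_vector_mult_add_rdistrib scaleR_matrix_vector_assoc[symmetric] mvo)
    then show ?thesis using feas by simp
  qed
  have xZx: "x \<bullet> (Z *v x) = lam / 2 * (x \<bullet> c)"
    using quad[of x] assms(3)
    by (simp add: Z_def matrix_vector_mult_add_rdistrib scaleR_matrix_vector_assoc[symmetric] inner_add_right)
       (simp add: inner_vec_def mvo sum_distrib_left sum_distrib_right inner_commute algebra_simps)
  have br: "y \<bullet> (Z *v x) \<le> x \<bullet> (Z *v x)" if "prob_vec y" for y
  proof -
    have "y \<bullet> (Z *v x) = (\<Sum>i\<in>UNIV. y $ i * (Z *v x) $ i)" by (simp add: inner_vec_def)
    also have "\<dots> \<le> (\<Sum>i\<in>UNIV. y $ i * p)"
      using that Zx by (intro sum_mono mult_left_mono) (auto simp: prob_vec_def)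
    also have "\<dots> = p" using that by (simp add: prob_vec_def sum_distrib_right[symmetric])
    finally show ?thesis using xZx ple by simp
  qed
  have tr: "x \<bullet> (transpose Z *v y) = y \<bullet> (Z *v x)" for y
    using dot_lmul_matrix[of y Z x] by (simp add: inner_commute)
  show ?thesis
    unfolding symmetric_nash_def nash_eq_def K_def[symmetric] Z_def[symmetric]
    using px br tr by simp
qed

end
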